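(* Let $d, s, t, \ell$ be integers with $s\ge 1$, $\ell \ge 0$, $d \geq t-1$ and $t \geq \max\{5, \ell+4\}$. Then for every $\theta_{t,\ell}\in\Theta_{t,\ell}$, \[ \mathrm{rb}(W_d, \theta_{t,\ell}) \ge \left\lfloor \frac{2t-7}{t-3}\, d \right\rfloor + 1, \] and furthermore, if ($s = 2$ and $t \geq 6$) or ($s \geq 3$ and $t \geq 7$), then \[ \mathrm{rb}(W_d(s), F_t) \ge \left\lfloor \frac{(s+1)t-(3s+4)}{t-3}\, d \right\rfloor + 1 . \]
   Context: A subgraph of an edge-colored graph is rainbow if no two of its edges have the same color. For graphs $G$ and $H$, the rainbow number $\mathrm{rb}(G,H)$ is the minimum integer $k$ such that every edge-coloring of $G$ that uses at least $k$ distinct colors contains a rainbow subgraph isomorphic to $H$. For $d \ge 3$ and $s \ge 1$, $W_d(s) = \overline{K_s} + C_d$: hub vertices $u_1,\dots,u_s$, pairwise non-adjacent, each adjacent to every vertex of a cycle $v_1v_2\cdots v_dv_1$; $W_d := W_d(1)$. The fan $F_t$ is obtained from a cycle $v_1v_2\cdots v_tv_1$ by adding all chords $v_1v_i$, $3 \le i \le t-1$. For $0 \le \ell \le t-3$, $\Theta_{t,\ell}$ is the class of graphs obtained from a cycle $v_1v_2\cdots v_tv_1$ by adding exactly $\ell$ chords, each from $\{v_1v_i : 3 \le i \le t-1\}$. *)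

theory Defs
  imports Complex_Main
begin

text \<open>A (simple) graph is a pair (vertex set, edge set); every edge is a 2-element
  subset of the vertex set.\<close>
type_synonym 'a graph = "'a set \<times> 'a set set"

definition has_rainbow_copy :: "('b set \<Rightarrow> nat) \<Rightarrow> 'b graph \<Rightarrow> 'a graph \<Rightarrow> bool" where
  "has_rainbow_copy c G H \<longleftrightarrow>
     (\<exists>f. inj_on f (fst H) \<and> f ` fst H \<subseteq> fst G \<and>
          (\<forall>e\<in>snd H. f ` e \<in> snd G) \<and>
          inj_on (\<lambda>e. c (f ` e)) (snd H))"

definition rb :: "'b graph \<Rightarrow> 'a graph \<Rightarrow> nat" where
  "rb G H = (LEAST k. \<forall>c :: 'b set \<Rightarrow> nat.
       card (c ` snd G) \<ge> k \<longrightarrow> has_rainbow_copy c G H)"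

text \<open>Generalized wheel W_d(s): hubs Inl i (i < s), cycle vertices Inr j (j < d),
  cycle v_1 ... v_d being Inr 0, ..., Inr (d-1).\<close>
definition gen_wheel :: "nat \<Rightarrow> nat \<Rightarrow> (nat + nat) graph" where
  "gen_wheel d s =
     (Inl ` {..<s} \<union> Inr ` {..<d},
      {{Inl i, Inr j} | i j. i < s \<and> j < d} \<union>
      {{Inr j, Inr ((j + 1) mod d)} | j. j < d})"

definition wheel :: "nat \<Rightarrow> (nat + nat) graph" where
  "wheel d = gen_wheel d 1"

text \<open>Cycle v_1 ... v_t with vertex v_i represented by i - 1 (so v_1 = 0).\<close>
definition cycle_edges :: "nat \<Rightarrow> nat set set" where
  "cycle_edges t = {{i, (i + 1) mod t} | i. i < t}"

text \<open>Admissible chords v_1 v_i, 3 \<le> i \<le> t-1, i.e. {0, j} with 2 \<le> j \<le> t-2.\<close>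
definition fan_chords :: "nat \<Rightarrow> nat set set" where
  "fan_chords t = {{0, j} | j. 2 \<le> j \<and> j \<le> t - 2}"

definition fan :: "nat \<Rightarrow> nat graph" where
  "fan t = ({..<t}, cycle_edges t \<union> fan_chords t)"

definition Theta :: "nat \<Rightarrow> nat \<Rightarrow> nat graph set" where
  "Theta t l = {({..<t}, cycle_edges t \<union> C) | C. C \<subseteq> fan_chords t \<and> card C = l}"

end

theory Submission
  imports Defs
begin


definition rimedge :: "nat \<Rightarrow> nat \<Rightarrow> (nat + nat) set" where
  "rimedge d j = {Inr j, Inr (Suc j mod d)}"
definition Rn :: "nat \<Rightarrow> nat \<Rightarrow> nat" where "Rn d m = d - 1 - (d - 1) div m"
definition orig :: "nat \<Rightarrow> nat \<Rightarrow> nat" where "orig m j = j - j div m"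
definition rimc :: "nat \<Rightarrow> nat \<Rightarrow> nat \<Rightarrow> nat" where "rimc d m j = orig m j mod Rn d m"
definition col :: "nat \<Rightarrow> nat \<Rightarrow> (nat + nat) set \<Rightarrow> nat" where
  "col d m e = (if \<exists>j<d. e = rimedge d j then rimc d m (THE j. j < d \<and> e = rimedge d j)
      else Rn d m + (THE i. Inl i \<in> e) * d + (THE j. Inr j \<in> e))"

lemma plus2_mod: "d \<ge> 3 \<Longrightarrow> j < d \<Longrightarrow> Suc (Suc j mod d) mod d \<noteq> j"
proof -
  assume a: "d \<ge> 3" "j < d"
  show ?thesis
  proof (cases "Suc j < d")
    case True
    then show ?thesis using a by (cases "Suc (Suc j) < d") (auto simp: mod_if)
  next
    case False
    then have "Suc j = d" using a by simp
    then show ?thesis using a by auto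
  qed
qed

lemma rimedge_inj: "d \<ge> 3 \<Longrightarrow> j < d \<Longrightarrow> j' < d \<Longrightarrow> rimedge d j = rimedge d j' \<Longrightarrow> j = j'"
  unfolding rimedge_def
  by (metis (no_types, lifting) Inr_inject doubleton_eq_iff plus2_mod)

lemma col_rim: "d \<ge> 3 \<Longrightarrow> j < d \<Longrightarrow> col d m (rimedge d j) = rimc d m j"
proof -
  assume a: "d \<ge> 3" "j < d"
  have "(THE j'. j' < d \<and> rimedge d j = rimedge d j') = j"
    by (rule the_equality) (use a rimedge_inj in auto)
  then show ?thesis using a unfolding col_def by auto
qed

lemma col_spoke: "col d m {Inl i, Inr j} = Rn d m + i * d + j"
proof -
  have "\<not> (\<exists>j'<d. {Inl i, Inr j} = rimedge d j')" unfolding rimedge_def by auto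
  moreover have "(THE i'. Inl i' \<in> {Inl i, Inr j :: nat + nat}) = i" by auto
  moreover have "(THE j'. Inr j' \<in> {Inl i, Inr j :: nat + nat}) = j" by auto
  ultimately show ?thesis unfolding col_def by (metis (no_types, lifting))
qed

lemma E_rr: "{Inr x, Inr y} \<in> snd (gen_wheel d s) \<Longrightarrow> Suc x mod d = y \<or> Suc y mod d = x"
  unfolding gen_wheel_def by (auto simp: doubleton_eq_iff)

lemma E_rr': "{Inr x, Inr y} \<in> snd (gen_wheel d s) \<Longrightarrow> x < d \<and> y < d"
  unfolding gen_wheel_def by (auto simp: doubleton_eq_iff)

lemma E_ll: "{Inl x, Inl y} \<notin> snd (gen_wheel d s)"
  unfolding gen_wheel_def by (auto simp: doubleton_eq_iff)

lemma E_l: "{Inl h, y} \<in> snd (gen_wheel d s) \<Longrightarrow> \<exists>j<d. y = Inr j"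
  unfolding gen_wheel_def by (auto simp: doubleton_eq_iff)

lemma E_r: "{Inr v, y} \<in> snd (gen_wheel d s) \<Longrightarrow>
   (\<exists>i<s. y = Inl i) \<or> (\<exists>w<d. y = Inr w \<and> (Suc v mod d = w \<or> Suc w mod d = v))"
  unfolding gen_wheel_def by (auto simp: doubleton_eq_iff)

lemma finite_E: "finite (snd (gen_wheel d s))"
proof -
  have "{{Inl i, Inr j} | i j. i < s \<and> j < d} = (\<lambda>(i,j). {Inl i, Inr j}) ` ({..<s} \<times> {..<d})"
    by auto
  moreover have "{{Inr j, Inr ((j + 1) mod d)} | j. j < d} = (\<lambda>j. {Inr j, Inr ((j + 1) mod d)}) ` {..<d}"
    by auto
  ultimately show ?thesis unfolding gen_wheel_def by simp
qed



lemma suc_mod_inj: "x < d \<Longrightarrow> y < d \<Longrightarrow> Suc x mod d = Suc y mod d \<Longrightarrow> x = y"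
  by (cases "Suc x = d"; cases "Suc y = d") auto

lemma modcancel: "((a::nat) + k) mod d = (b + k) mod d \<Longrightarrow> a mod d = b mod d"
  by (simp add: nat_mod_eq_iff)

lemma dir:
  assumes "d \<ge> 3" "\<forall>i\<le>n. g i < d" "inj_on g {..n}"
    "\<forall>i<n. Suc (g i) mod d = g (Suc i) \<or> Suc (g (Suc i)) mod d = g i"
  shows "(\<forall>i\<le>n. g i = (g 0 + i) mod d) \<or> (\<forall>i\<le>n. g 0 = (g i + i) mod d)"
  using assms
proof (induction n)
  case 0
  then show ?case by auto
next
  case (Suc n)
  have inj: "inj_on g {..n}" using Suc.prems(3) by (rule inj_on_subset) auto
  have IH: "(\<forall>i\<le>n. g i = (g 0 + i) mod d) \<or> (\<forall>i\<le>n. g 0 = (g i + i) mod d)"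
    using Suc.IH Suc.prems inj by auto
  have adj: "Suc (g n) mod d = g (Suc n) \<or> Suc (g (Suc n)) mod d = g n" using Suc.prems(4) by auto
  have lt: "g n < d" "g (Suc n) < d" using Suc.prems(2) by auto
  show ?case
  proof (cases n)
    case 0
    have l1: "\<forall>i\<le>Suc 0. g i = (g 0 + i) mod d" if "Suc (g 0) mod d = g (Suc 0)"
      using that lt 0 Suc.prems(2) by (auto simp: le_Suc_eq)
    have l2: "\<forall>i\<le>Suc 0. g 0 = (g i + i) mod d" if "Suc (g (Suc 0)) mod d = g 0"
      using that lt 0 Suc.prems(2) by (auto simp: le_Suc_eq)
    show ?thesis using adj[unfolded 0] l1 l2 unfolding 0 by blast
  next
    case (Suc k)
    have ne: "g (Suc n) \<noteq> g k" using Suc.prems(3) Suc by (auto dest: inj_onD)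
    have adj2: "Suc (g k) mod d = g n \<or> Suc (g n) mod d = g k" using Suc.prems(4) Suc by auto
    have ltk: "g k < d" using Suc.prems(2) Suc by auto
    from IH show ?thesis
    proof
      assume A: "\<forall>i\<le>n. g i = (g 0 + i) mod d"
      have "g n = (g 0 + n) mod d" by (rule A[rule_format]) simp
      have "g k = (g 0 + k) mod d" by (rule A[rule_format]) (simp add: Suc)
      then have "g n = Suc (g k) mod d" using \<open>g n = (g 0 + n) mod d\<close> Suc by (simp add: mod_Suc_eq)
      then have "g (Suc n) = Suc (g n) mod d" using adj ne lt ltk suc_mod_inj by metis
      then have "g (Suc n) = (g 0 + Suc n) mod d" using \<open>g n = (g 0 + n) mod d\<close> by (simp add: mod_Suc_eq)
      then show ?thesis using A by (metis le_Suc_eq)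
    next
      assume A: "\<forall>i\<le>n. g 0 = (g i + i) mod d"
      have "g 0 = (g k + k) mod d" by (rule A[rule_format]) (simp add: Suc)
      have "g 0 = (g n + n) mod d" by (rule A[rule_format]) simp
      then have "(g k + k) mod d = (g n + n) mod d" using \<open>g 0 = (g k + k) mod d\<close> by simp
      then have "(g k + k) mod d = (Suc (g n) + k) mod d" using Suc by simp
      then have "g k mod d = Suc (g n) mod d" by (rule modcancel)
      then have "g k = Suc (g n) mod d" using ltk by simp
      then have "Suc (g (Suc n)) mod d = g n" using adj ne by metis
      then have "g 0 = (g (Suc n) + Suc n) mod d" using \<open>g 0 = (g n + n) mod d\<close>
        by (metis add_Suc add_Suc_right mod_add_left_eq)
      then show ?thesis using A by (metis le_Suc_eq)
    qed
  qed
qed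



lemma orig_step: "m \<ge> 2 \<Longrightarrow> j mod m = m - 1 \<Longrightarrow> orig m (Suc j) = orig m j"
proof -
  assume a: "m \<ge> 2" "j mod m = m - 1"
  have "Suc j div m = Suc (j div m)" using a by (simp add: div_Suc mod_Suc)
  moreover have "j div m \<le> j" by simp
  ultimately show ?thesis unfolding orig_def by simp
qed

lemma jmod: "(m::nat) \<ge> 2 \<Longrightarrow> (a + (m - 1 - a mod m)) mod m = m - 1"
proof -
  assume a: "m \<ge> 2"
  have "a mod m < m" using a by simp
  then have "a + (m - 1 - a mod m) = (a div m) * m + (m - 1)"
    using div_mult_mod_eq[of a m] by linarith
  then have "(a + (m - 1 - a mod m)) mod m = (m - 1) mod m"
    by (metis mod_mult_self3)
  then show ?thesis using a by simp
qed

lemma window: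
  assumes "m \<ge> 2" "a < d" "Suc m < d"
  shows "\<exists>i<m. rimc d m ((a + i) mod d) = rimc d m ((a + Suc i) mod d)"
proof (cases "a + m < d")
  case True
  define i where "i = m - 1 - a mod m"
  have im: "i < m" unfolding i_def using assms by simp
  have jm: "(a + i) mod m = m - 1" unfolding i_def using jmod assms by simp
  have "orig m (Suc (a + i)) = orig m (a + i)" using orig_step[OF assms(1) jm] .
  moreover have "(a + i) mod d = a + i" "(a + Suc i) mod d = Suc (a + i)" using True im by auto
  ultimately show ?thesis using im unfolding rimc_def by metis
next
  case False
  define i where "i = d - 1 - a"
  have im: "i < m" unfolding i_def using assms False by simp
  have "(a + i) mod d = d - 1" "(a + Suc i) mod d = 0" unfolding i_def using assms by auto
  moreover have "orig m (d - 1) = Rn d m" unfolding orig_def Rn_def by simp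
  ultimately have "rimc d m ((a + i) mod d) = rimc d m ((a + Suc i) mod d)"
    unfolding rimc_def by (simp add: orig_def)
  then show ?thesis using im by blast
qed



lemma pe_distinct:
  assumes "inj_on g {..n}" "i1 < n" "i2 < n" "i1 \<noteq> i2"
  shows "{Inr (g i1), Inr (g (Suc i1))} \<noteq> ({Inr (g i2), Inr (g (Suc i2))} :: (nat + nat) set)"
proof
  assume "{Inr (g i1), Inr (g (Suc i1))} = ({Inr (g i2), Inr (g (Suc i2))} :: (nat + nat) set)"
  then have "(g i1 = g i2 \<and> g (Suc i1) = g (Suc i2)) \<or> (g i1 = g (Suc i2) \<and> g (Suc i1) = g i2)"
    by (auto simp: doubleton_eq_iff)
  then show False
  proof
    assume "g i1 = g i2 \<and> g (Suc i1) = g (Suc i2)"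
    then have "i1 = i2" using assms(1-3) by (auto dest: inj_onD)
    then show False using assms(4) by simp
  next
    assume h: "g i1 = g (Suc i2) \<and> g (Suc i1) = g i2"
    then have "i1 = Suc i2" using assms(1-3) by (auto dest: inj_onD)
    moreover have "Suc i1 = i2" using h assms(1-3) by (auto dest: inj_onD)
    ultimately show False by simp
  qed
qed

lemma path_colors:
  assumes "d \<ge> 3" "m \<ge> 2" "Suc (Suc m) \<le> d"
    "inj_on g {..Suc m}" "\<forall>i\<le>Suc m. g i < d"
    "\<forall>i<Suc m. Suc (g i) mod d = g (Suc i) \<or> Suc (g (Suc i)) mod d = g i"
  shows "\<exists>i1<Suc m. \<exists>i2<Suc m. i1 \<noteq> i2 \<and>
     col d m {Inr (g i1), Inr (g (Suc i1))} = col d m {Inr (g i2), Inr (g (Suc i2))}"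
proof -
  let ?n = "Suc m"
  have d0: "d > 0" using assms by simp
  from dir[OF assms(1) assms(5) assms(4) assms(6)]
  show ?thesis
  proof
    assume A: "\<forall>i\<le>?n. g i = (g 0 + i) mod d"
    have pe: "col d m {Inr (g i), Inr (g (Suc i))} = rimc d m ((g 0 + i) mod d)" if "i < ?n" for i
    proof -
      have "g i = (g 0 + i) mod d" by (rule A[rule_format]) (use that in simp)
      moreover have "g (Suc i) = (g 0 + Suc i) mod d" by (rule A[rule_format]) (use that in simp)
      ultimately have "{Inr (g i), Inr (g (Suc i))} = rimedge d ((g 0 + i) mod d)"
        unfolding rimedge_def by (simp add: mod_Suc_eq)
      then show ?thesis using col_rim[OF assms(1)] d0 by simp
    qed
    obtain i where i: "i < m" "rimc d m ((g 0 + i) mod d) = rimc d m ((g 0 + Suc i) mod d)"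
      using window[OF assms(2), of "g 0" d] assms by auto
    have "col d m {Inr (g i), Inr (g (Suc i))} = col d m {Inr (g (Suc i)), Inr (g (Suc (Suc i)))}"
      using i pe[of i] pe[of "Suc i"] by simp
    then show ?thesis using i by (intro exI[of _ i] conjI exI[of _ "Suc i"]) auto
  next
    assume A: "\<forall>i\<le>?n. g 0 = (g i + i) mod d"
    have step: "Suc (g (Suc k)) mod d = g k" if "k < ?n" for k
    proof -
      have "g 0 = (g k + k) mod d" by (rule A[rule_format]) (use that in simp)
      moreover have "g 0 = (g (Suc k) + Suc k) mod d" by (rule A[rule_format]) (use that in simp)
      ultimately have "(g k + k) mod d = (Suc (g (Suc k)) + k) mod d" by simp
      then have "g k mod d = Suc (g (Suc k)) mod d" by (rule modcancel)
      then show ?thesis using assms(5) that by simp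
    qed
    have pe: "col d m {Inr (g k), Inr (g (Suc k))} = rimc d m (g (Suc k))" if "k < ?n" for k
    proof -
      have "{Inr (g k), Inr (g (Suc k))} = rimedge d (g (Suc k))"
        unfolding rimedge_def using step[OF that] by auto
      then show ?thesis using col_rim[OF assms(1)] assms(5) that by simp
    qed
    have bk: "g (?n - i) = (g ?n + i) mod d" if "i \<le> ?n" for i
    proof -
      have "g 0 = (g (?n - i) + (?n - i)) mod d" by (rule A[rule_format]) simp
      moreover have "g 0 = (g ?n + ?n) mod d" by (rule A[rule_format]) simp
      ultimately have "(g (?n - i) + (?n - i)) mod d = ((g ?n + i) + (?n - i)) mod d"
        using that by simp
      then have "g (?n - i) mod d = (g ?n + i) mod d" by (rule modcancel)
      then show ?thesis using assms(5) by simp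
    qed
    have gn: "g ?n < d" using assms(5) by simp
    obtain i where i: "i < m" "rimc d m ((g ?n + i) mod d) = rimc d m ((g ?n + Suc i) mod d)"
      using window[OF assms(2) gn] assms by auto
    have e1: "rimc d m (g (?n - i)) = rimc d m (g (?n - Suc i))"
      using i bk[of i] bk[of "Suc i"] by simp
    have "col d m {Inr (g (m - i)), Inr (g (Suc (m - i)))} = rimc d m (g (?n - i))"
      using pe[of "m - i"] i Suc_diff_le by simp
    moreover have "col d m {Inr (g (m - Suc i)), Inr (g (Suc (m - Suc i)))} = rimc d m (g (?n - Suc i))"
    proof -
      have h: "Suc (m - Suc i) = Suc m - Suc i" using i by simp
      have "m - Suc i < Suc m" by simp
      from pe[OF this] show ?thesis unfolding h .
    qed
    ultimately show ?thesis using e1 i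
      by (intro exI[of _ "m - i"] conjI exI[of _ "m - Suc i"]) auto
  qed
qed

lemma path_contra:
  assumes "d \<ge> 3" "m \<ge> 2" "Suc (Suc m) \<le> d"
    "inj_on g {..Suc m}" "\<forall>i\<le>Suc m. g i < d"
    "\<forall>i<Suc m. Suc (g i) mod d = g (Suc i) \<or> Suc (g (Suc i)) mod d = g i"
    "\<forall>i<Suc m. E i \<in> EH \<and> f ` E i = {Inr (g i), Inr (g (Suc i))}"
    "inj_on (\<lambda>e. col d m (f ` e)) EH"
  shows False
proof -
  obtain i1 i2 where i: "i1 < Suc m" "i2 < Suc m" "i1 \<noteq> i2"
    "col d m {Inr (g i1), Inr (g (Suc i1))} = col d m {Inr (g i2), Inr (g (Suc i2))}"
    using path_colors[OF assms(1-6)] by blast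
  have "f ` E i1 \<noteq> f ` E i2" using pe_distinct[OF assms(4) i(1-3)] assms(7) i by simp
  then have "E i1 \<noteq> E i2" by auto
  moreover have "col d m (f ` E i1) = col d m (f ` E i2)" using assms(7) i by simp
  ultimately show False using assms(7,8) i by (meson inj_onD)
qed



lemma dIVT: "(\<forall>j<N. h (Suc j) \<le> Suc (h j)) \<Longrightarrow> h 0 = 0 \<Longrightarrow> v \<le> h N \<Longrightarrow> \<exists>j\<le>N. h j = (v::nat)"
proof (induction N)
  case 0
  then show ?case by auto
next
  case (Suc N)
  show ?case
  proof (cases "v \<le> h N")
    case True
    then show ?thesis using Suc by (metis le_SucI less_SucI)
  next
    case False
    have "h (Suc N) \<le> Suc (h N)" using Suc.prems(1) by simp
    then have "v = h (Suc N)" using Suc.prems(3) False by linarith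
    then show ?thesis by blast
  qed
qed

lemma orig_suc: "orig m (Suc j) \<le> Suc (orig m j)"
proof -
  have "j div m \<le> Suc j div m" by (simp add: div_le_mono)
  moreover have "j div m \<le> j" by simp
  ultimately show ?thesis unfolding orig_def by linarith
qed

lemma colors:
  assumes "d \<ge> 3"
  shows "{..< Rn d m + s * d} \<subseteq> col d m ` snd (gen_wheel d s)"
proof
  fix v assume v: "v \<in> {..< Rn d m + s * d}"
  show "v \<in> col d m ` snd (gen_wheel d s)"
  proof (cases "v < Rn d m")
    case True
    have "orig m (d - 1) = Rn d m" unfolding orig_def Rn_def by simp
    then obtain j where j: "j \<le> d - 1" "orig m j = v"
      using dIVT[of "d - 1" "orig m" v] orig_suc True by (auto simp: orig_def)
    have jd: "j < d" using j assms by simp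
    have "rimedge d j \<in> snd (gen_wheel d s)" unfolding gen_wheel_def rimedge_def using jd by auto
    moreover have "col d m (rimedge d j) = v" using col_rim[OF assms jd] j True by (simp add: rimc_def)
    ultimately show ?thesis by (metis image_eqI)
  next
    case False
    define k where "k = v - Rn d m"
    have k: "k < s * d" using v False unfolding k_def by auto
    have d0: "d > 0" using assms by simp
    have i: "k div d < s" using k d0 by (simp add: div_less_iff_less_mult mult.commute)
    have jd: "k mod d < d" using d0 by simp
    have "{Inl (k div d), Inr (k mod d)} \<in> snd (gen_wheel d s)" unfolding gen_wheel_def using i jd by auto
    moreover have "col d m {Inl (k div d), Inr (k mod d)} = v"
      unfolding col_spoke k_def using False by (simp add: div_mult_mod_eq)
    ultimately show ?thesis by (metis image_eqI)
  qed
qed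

lemma card_colors:
  assumes "d \<ge> 3"
  shows "Rn d m + s * d \<le> card (col d m ` snd (gen_wheel d s))"
proof -
  have "card {..< Rn d m + s * d} \<le> card (col d m ` snd (gen_wheel d s))"
    by (rule card_mono) (use finite_E colors[OF assms] in auto)
  then show ?thesis by simp
qed

lemma rb_lower:
  fixes G :: "'b graph" and H :: "'a graph" and c :: "'b set \<Rightarrow> nat"
  assumes "finite (snd G)" "X \<le> card (c ` snd G)" "\<not> has_rainbow_copy c G H"
  shows "X < rb G H"
proof -
  let ?P = "\<lambda>k. \<forall>c :: 'b set \<Rightarrow> nat. card (c ` snd G) \<ge> k \<longrightarrow> has_rainbow_copy c G H"
  have "?P (Suc (card (snd G)))"
  proof (intro allI impI)
    fix c' :: "'b set \<Rightarrow> nat" assume "Suc (card (snd G)) \<le> card (c' ` snd G)"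
    moreover have "card (c' ` snd G) \<le> card (snd G)" using assms(1) by (rule card_image_le)
    ultimately show "has_rainbow_copy c' G H" by simp
  qed
  then have P: "?P (rb G H)" unfolding rb_def by (rule LeastI)
  show ?thesis
  proof (rule ccontr)
    assume "\<not> X < rb G H"
    then have "rb G H \<le> card (c ` snd G)" using assms(2) by simp
    then show False using P assms(3) by blast
  qed
qed



lemma theta_no:
  assumes "d \<ge> t - 1" "t \<ge> 5" "\<theta> \<in> Theta t l"
  shows "\<not> has_rainbow_copy (col d (t - 3)) (wheel d) \<theta>"
proof
  assume "has_rainbow_copy (col d (t - 3)) (wheel d) \<theta>"
  then obtain f where f: "inj_on f (fst \<theta>)" "f ` fst \<theta> \<subseteq> fst (wheel d)"
    "\<forall>e\<in>snd \<theta>. f ` e \<in> snd (wheel d)" "inj_on (\<lambda>e. col d (t - 3) (f ` e)) (snd \<theta>)"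
    unfolding has_rainbow_copy_def by blast
  obtain C where C: "\<theta> = ({..<t}, cycle_edges t \<union> C)" using assms(3) unfolding Theta_def by blast
  define m where "m = t - 3"
  have m2: "m \<ge> 2" and d3: "d \<ge> 3" and mt: "Suc (Suc m) \<le> d" and tm: "t = Suc (Suc (Suc m))"
    using assms unfolding m_def by auto
  define p where "p = (if \<exists>p<t. f p = Inl 0 then SOME p. p < t \<and> f p = Inl 0 else t - 1)"
  have pt: "p < t" unfolding p_def using assms(2) by (auto intro: someI2_ex)
  have hub: "f x = Inl 0 \<Longrightarrow> x < t \<Longrightarrow> x = p" for x
  proof -
    assume x: "f x = Inl 0" "x < t"
    then have ex: "\<exists>p<t. f p = Inl 0" by blast
    then have "p < t \<and> f p = Inl 0" unfolding p_def using someI_ex[OF ex] by simp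
    then show "x = p" using x f(1) C by (metis fst_conv inj_onD lessThan_iff)
  qed
  define q where "q i = (p + Suc i) mod t" for i
  have qt: "q i < t" for i unfolding q_def using assms(2) by simp
  have qp: "q i \<noteq> p" if "i \<le> Suc m" for i
  proof
    assume "q i = p"
    then have "(p + Suc i) mod t = (p + 0) mod t" unfolding q_def using pt by simp
    then have "Suc i mod t = 0 mod t" using modcancel[of "Suc i" p t 0] by (simp add: add.commute)
    then show False using that tm by simp
  qed
  have qinj: "i = j" if "i \<le> Suc m" "j \<le> Suc m" "q i = q j" for i j
  proof -
    have "(i + Suc p) mod t = (j + Suc p) mod t" using that(3) unfolding q_def by (simp add: add.commute)
    then have "i mod t = j mod t" by (rule modcancel)
    then show ?thesis using that tm by simp
  qed
  have Vw: "fst (wheel d) = Inl ` {..<1} \<union> Inr ` {..<d}" unfolding wheel_def gen_wheel_def by simp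
  define g where "g i = projr (f (q i))" for i
  have fq: "f (q i) = Inr (g i) \<and> g i < d" if "i \<le> Suc m" for i
  proof -
    have "f (q i) \<in> fst (wheel d)" using f(2) qt C by auto
    moreover have "f (q i) \<noteq> Inl 0" using hub qt qp that by blast
    ultimately show ?thesis unfolding Vw g_def by auto
  qed
  have ginj: "inj_on g {..Suc m}"
  proof (rule inj_onI)
    fix i j assume ij: "i \<in> {..Suc m}" "j \<in> {..Suc m}" "g i = g j"
    then have "f (q i) = f (q j)" using fq by auto
    then have "q i = q j" using f(1) C qt by (auto dest: inj_onD)
    then show "i = j" using qinj ij by auto
  qed
  define E where "E i = {q i, Suc (q i) mod t}" for i
  have qs: "q (Suc i) = Suc (q i) mod t" for i unfolding q_def by (simp add: mod_Suc_eq)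
  have Ei: "E i \<in> snd \<theta> \<and> f ` E i = {Inr (g i), Inr (g (Suc i))}" if "i < Suc m" for i
  proof -
    have "E i \<in> cycle_edges t" unfolding E_def cycle_edges_def using qt by auto
    then have "E i \<in> snd \<theta>" using C by simp
    moreover have "f ` E i = {Inr (g i), Inr (g (Suc i))}"
      unfolding E_def using fq[of i] fq[of "Suc i"] that qs[of i] by simp
    ultimately show ?thesis by simp
  qed
  have adj: "\<forall>i<Suc m. Suc (g i) mod d = g (Suc i) \<or> Suc (g (Suc i)) mod d = g i"
  proof (intro allI impI)
    fix i assume "i < Suc m"
    then have "{Inr (g i), Inr (g (Suc i))} \<in> snd (gen_wheel d 1)"
      using Ei f(3) unfolding wheel_def by metis
    then show "Suc (g i) mod d = g (Suc i) \<or> Suc (g (Suc i)) mod d = g i" by (rule E_rr)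
  qed
  show False
    using path_contra[OF d3 m2 mt ginj _ adj, of E "snd \<theta>" f] fq Ei f(4) unfolding m_def by auto
qed



lemma W_card: "card {w. w < d \<and> Suc w mod d = v} \<le> 1"
proof -
  have "finite {w. w < d \<and> Suc w mod d = v}" by simp
  moreover have "\<forall>a\<in>{w. w < d \<and> Suc w mod d = v}. \<forall>b\<in>{w. w < d \<and> Suc w mod d = v}. a = b"
  proof (intro ballI)
    fix a b assume "a \<in> {w. w < d \<and> Suc w mod d = v}" "b \<in> {w. w < d \<and> Suc w mod d = v}"
    then have "a < d" "b < d" "Suc a mod d = Suc b mod d" by auto
    then show "a = b" by (rule suc_mod_inj)
  qed
  ultimately have "card {w. w < d \<and> Suc w mod d = v} \<le> Suc 0"
    by (rule card_le_Suc0_iff_eq[THEN iffD2])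
  then show ?thesis by simp
qed

lemma fan_no:
  assumes "d \<ge> t - 1" "(s = 2 \<and> t \<ge> 6) \<or> (s \<ge> 3 \<and> t \<ge> 7)"
  shows "\<not> has_rainbow_copy (col d (t - 3)) (gen_wheel d s) (fan t)"
proof
  assume "has_rainbow_copy (col d (t - 3)) (gen_wheel d s) (fan t)"
  then obtain f where f: "inj_on f {..<t}" "f ` {..<t} \<subseteq> fst (gen_wheel d s)"
    "\<forall>e\<in>snd (fan t). f ` e \<in> snd (gen_wheel d s)"
    "inj_on (\<lambda>e. col d (t - 3) (f ` e)) (snd (fan t))"
    unfolding has_rainbow_copy_def fan_def by auto
  define m where "m = t - 3"
  have t6: "t \<ge> 6" using assms by auto
  have m2: "m \<ge> 2" and d3: "d \<ge> 3" and mt: "Suc (Suc m) \<le> d" and tm: "t = Suc (Suc (Suc m))"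
    using assms t6 unfolding m_def by auto
  have spoke: "{0, i} \<in> snd (fan t)" if i1: "1 \<le> i" "i < t" for i
  proof -
    consider "i = 1" | "i = t - 1" | "2 \<le> i \<and> i \<le> t - 2" using i1 by (cases "i = 1"; cases "i = t - 1") auto
    then show ?thesis
    proof cases
      case 1
      have "{0, Suc 0 mod t} \<in> cycle_edges t" unfolding cycle_edges_def
        by (rule CollectI, rule exI[of _ 0]) (use t6 in simp)
      then show ?thesis using 1 t6 unfolding fan_def by simp
    next
      case 2
      have "{t - 1, Suc (t - 1) mod t} \<in> cycle_edges t" unfolding cycle_edges_def
        by (rule CollectI, rule exI[of _ "t - 1"]) (use t6 in simp)
      moreover have "Suc (t - 1) mod t = 0" using t6 by simp
      ultimately show ?thesis using 2 unfolding fan_def by (simp add: insert_commute)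
    next
      case 3
      then show ?thesis unfolding fan_def fan_chords_def by auto
    qed
  qed
  have pathE: "{i, Suc i} \<in> snd (fan t)" if "Suc i < t" for i
  proof -
    have "{i, Suc i mod t} \<in> cycle_edges t" unfolding cycle_edges_def using that by auto
    then show ?thesis using that unfolding fan_def by simp
  qed
  have fE: "{f a, f b} \<in> snd (gen_wheel d s)" if "{a, b} \<in> snd (fan t)" for a b
    using f(3) that by force
  show False
  proof (cases "f 0")
    case (Inl h)
    have rim: "\<exists>j<d. f i = Inr j" if "1 \<le> i" "i < t" for i
      using E_l[of h "f i" d s] fE[OF spoke[OF that]] Inl by simp
    define g where "g i = projr (f (Suc i))" for i
    have fg: "f (Suc i) = Inr (g i) \<and> g i < d" if "i \<le> Suc m" for i
      using rim[of "Suc i"] that tm unfolding g_def by auto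
    have ginj: "inj_on g {..Suc m}"
    proof (rule inj_onI)
      fix i j assume ij: "i \<in> {..Suc m}" "j \<in> {..Suc m}" "g i = g j"
      then have "f (Suc i) = f (Suc j)" using fg by auto
      then have "Suc i = Suc j" using f(1) ij tm by (auto dest: inj_onD)
      then show "i = j" by simp
    qed
    define E where "E i = {Suc i, Suc (Suc i)}" for i
    have Ei: "E i \<in> snd (fan t) \<and> f ` E i = {Inr (g i), Inr (g (Suc i))}" if "i < Suc m" for i
      unfolding E_def using pathE[of "Suc i"] fg[of i] fg[of "Suc i"] that tm by simp
    have adj: "\<forall>i<Suc m. Suc (g i) mod d = g (Suc i) \<or> Suc (g (Suc i)) mod d = g i"
    proof (intro allI impI)
      fix i assume "i < Suc m"
      then have "{Inr (g i), Inr (g (Suc i))} \<in> snd (gen_wheel d s)"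
        using Ei f(3) by metis
      then show "Suc (g i) mod d = g (Suc i) \<or> Suc (g (Suc i)) mod d = g i" by (rule E_rr)
    qed
    show False
      using path_contra[OF d3 m2 mt ginj _ adj, of E "snd (fan t)" f] fg Ei f(4) unfolding m_def by auto
  next
    case (Inr v)
    define W where "W = {Suc v mod d} \<union> {w. w < d \<and> Suc w mod d = v}"
    have Wc: "card W \<le> 2" unfolding W_def
      by (rule order_trans[OF card_Un_le]) (use W_card[of d v] in simp)
    have fW: "finite W" unfolding W_def by simp
    have nb: "f i \<in> Inl ` {..<s} \<union> Inr ` W" if "1 \<le> i" "i < t" for i
      using E_r[of v "f i" d s] fE[OF spoke[OF that]] Inr unfolding W_def by auto
    show False
    proof (cases "s = 2")
      case True
      have sub5: "f ` {1..5} \<subseteq> Inl ` {..<s} \<union> Inr ` W"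
      proof (rule image_subsetI)
        fix i :: nat assume "i \<in> {1..5}"
        then show "f i \<in> Inl ` {..<s} \<union> Inr ` W" by (intro nb) (use t6 in auto)
      qed
      have c4: "card (Inl ` {..<s} \<union> Inr ` W) \<le> 4"
      proof -
        have "card (Inl ` {..<s} \<union> Inr ` W) \<le> card (Inl ` {..<s} :: (nat+nat) set) + card (Inr ` W :: (nat+nat) set)"
          by (rule card_Un_le)
        also have "\<dots> \<le> s + card W"
        proof -
          have "card (Inl ` {..<s} :: (nat+nat) set) \<le> card {..<s}" by (rule card_image_le) simp
          moreover have "card (Inr ` W :: (nat+nat) set) \<le> card W" by (rule card_image_le[OF fW])
          ultimately show ?thesis by simp
        qed
        finally show ?thesis using True Wc by simp
      qed
      have c5: "card (f ` {1..5}) = 5"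
      proof -
        have "inj_on f {1..5::nat}" by (rule inj_on_subset[OF f(1)]) (use t6 in auto)
        then have "card (f ` {1..5}) = card {1..5::nat}" by (rule card_image)
        then show ?thesis by simp
      qed
      have "finite (Inl ` {..<s} \<union> Inr ` W)" using fW by simp
      then have "card (f ` {1..5}) \<le> card (Inl ` {..<s} \<union> Inr ` W)" using sub5 by (rule card_mono)
      then show False using c4 c5 by linarith
    next
      case False
      then have t7: "t \<ge> 7" using assms by auto
      have pr: "\<exists>k\<in>{i, Suc i}. f k \<in> Inr ` W" if "1 \<le> i" "Suc i < t" for i
      proof (rule ccontr)
        assume "\<not> ?thesis"
        then have "f i \<in> Inl ` {..<s}" "f (Suc i) \<in> Inl ` {..<s}" using nb[of i] nb[of "Suc i"] that by auto
        moreover have "{f i, f (Suc i)} \<in> snd (gen_wheel d s)" using fE pathE that by blast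
        ultimately show False using E_ll by auto
      qed
      obtain k1 where k1: "k1 \<in> {1, 2}" "f k1 \<in> Inr ` W" using pr[of 1] t7 by (auto simp: numeral_2_eq_2)
      obtain k2 where k2: "k2 \<in> {3, 4}" "f k2 \<in> Inr ` W" using pr[of 3] t7 by auto
      obtain k3 where k3: "k3 \<in> {5, 6}" "f k3 \<in> Inr ` W" using pr[of 5] t7 by auto
      have "f ` {k1, k2, k3} \<subseteq> Inr ` W" using k1 k2 k3 by auto
      moreover have "card (f ` {k1, k2, k3}) = 3"
      proof -
        have "inj_on f {k1, k2, k3}" by (rule inj_on_subset[OF f(1)]) (use k1 k2 k3 t7 in auto)
        then have "card (f ` {k1, k2, k3}) = card {k1, k2, k3}" by (rule card_image)
        also have "\<dots> = 3" using k1 k2 k3 by auto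
        finally show ?thesis .
      qed
      moreover have "card (Inr ` W :: (nat + nat) set) \<le> card W" by (rule card_image_le[OF fW])
      moreover have "card (f ` {k1, k2, k3}) \<le> card (Inr ` W :: (nat + nat) set)"
        by (rule card_mono) (use fW \<open>f ` {k1, k2, k3} \<subseteq> Inr ` W\<close> in auto)
      ultimately show False using Wc by linarith
    qed
  qed
qed



lemma floor_bound:
  fixes s d t :: nat
  assumes "t \<ge> 5" "d \<ge> 1"
  shows "\<lfloor>((real s + 1) * real t - (3 * real s + 4)) / (real t - 3) * real d\<rfloor> \<le> int (Rn d (t - 3) + s * d)"
proof -
  define m where "m = t - 3"
  define q where "q = (d - 1) div m"
  have m2: "m \<ge> 2" unfolding m_def using assms by simp
  have qm: "q * m \<le> d - 1" unfolding q_def by (simp add: div_times_less_eq_dividend)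
  have "q \<le> q * m" using m2 by simp
  then have qd: "q \<le> d - 1" using qm by linarith
  have rt: "real t - 3 = real m" unfolding m_def using assms by simp
  have num: "(real s + 1) * real t - (3 * real s + 4) = (real s + 1) * real m - 1"
    unfolding m_def using assms by (simp add: of_nat_diff algebra_simps)
  have mpos: "real m > 0" using m2 by simp
  have x: "((real s + 1) * real t - (3 * real s + 4)) / (real t - 3) * real d = (real s + 1) * real d - real d / real m"
    unfolding rt num using mpos by (simp add: field_simps)
  have "real q * real m < real d" proof -
    have "q * m < d" using qm assms by linarith
    then show ?thesis by (metis of_nat_less_iff of_nat_mult)
  qed
  then have "real q < real d / real m" using mpos by (simp add: field_simps)
  then have lt: "(real s + 1) * real d - real d / real m < real (Rn d (t - 3) + s * d) + 1"
    unfolding Rn_def m_def[symmetric] q_def[symmetric] using qd assms by (simp add: of_nat_diff algebra_simps)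
  show ?thesis unfolding x using lt by (simp add: floor_le_iff)
qed


theorem theorem4p2:
  fixes d s t l :: nat
  assumes "s \<ge> 1" and "d \<ge> t - 1" and "t \<ge> 5" and "t \<ge> l + 4"
  shows "(\<forall>\<theta>\<in>Theta t l.
            int (rb (wheel d) \<theta>) \<ge> \<lfloor>(2 * real t - 7) / (real t - 3) * real d\<rfloor> + 1)
       \<and> (((s = 2 \<and> t \<ge> 6) \<or> (s \<ge> 3 \<and> t \<ge> 7)) \<longrightarrow>
            int (rb (gen_wheel d s) (fan t)) \<ge>
              \<lfloor>((real s + 1) * real t - (3 * real s + 4)) / (real t - 3) * real d\<rfloor> + 1)"
proof
  have d3: "d \<ge> 3" and d1: "d \<ge> 1" using assms by auto
  show "\<forall>\<theta>\<in>Theta t l.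
            int (rb (wheel d) \<theta>) \<ge> \<lfloor>(2 * real t - 7) / (real t - 3) * real d\<rfloor> + 1"
  proof
    fix \<theta> assume th: "\<theta> \<in> Theta t l"
    have "Rn d (t - 3) + 1 * d < rb (wheel d) \<theta>"
    proof (rule rb_lower)
      show "finite (snd (wheel d))" unfolding wheel_def by (rule finite_E)
      show "Rn d (t - 3) + 1 * d \<le> card (col d (t - 3) ` snd (wheel d))"
        unfolding wheel_def by (rule card_colors[OF d3])
      show "\<not> has_rainbow_copy (col d (t - 3)) (wheel d) \<theta>"
        by (rule theta_no[OF assms(2) assms(3) th])
    qed
    moreover have "\<lfloor>(2 * real t - 7) / (real t - 3) * real d\<rfloor> \<le> int (Rn d (t - 3) + 1 * d)"
    proof -
      have "(2 * real t - 7) = (real 1 + 1) * real t - (3 * real 1 + 4)" by simp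
      then show ?thesis using floor_bound[OF assms(3) d1, of 1] by simp
    qed
    ultimately show "int (rb (wheel d) \<theta>) \<ge> \<lfloor>(2 * real t - 7) / (real t - 3) * real d\<rfloor> + 1"
      by linarith
  qed
  show "((s = 2 \<and> t \<ge> 6) \<or> (s \<ge> 3 \<and> t \<ge> 7)) \<longrightarrow>
            int (rb (gen_wheel d s) (fan t)) \<ge>
              \<lfloor>((real s + 1) * real t - (3 * real s + 4)) / (real t - 3) * real d\<rfloor> + 1"
  proof
    assume c: "(s = 2 \<and> t \<ge> 6) \<or> (s \<ge> 3 \<and> t \<ge> 7)"
    have "Rn d (t - 3) + s * d < rb (gen_wheel d s) (fan t)"
    proof (rule rb_lower)
      show "finite (snd (gen_wheel d s))" by (rule finite_E)
      show "Rn d (t - 3) + s * d \<le> card (col d (t - 3) ` snd (gen_wheel d s))"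
        by (rule card_colors[OF d3])
      show "\<not> has_rainbow_copy (col d (t - 3)) (gen_wheel d s) (fan t)"
        by (rule fan_no[OF assms(2) c])
    qed
    moreover note floor_bound[OF assms(3) d1, of s]
    ultimately show "int (rb (gen_wheel d s) (fan t)) \<ge>
              \<lfloor>((real s + 1) * real t - (3 * real s + 4)) / (real t - 3) * real d\<rfloor> + 1"
      by linarith
  qed
qed

end
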